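(* Let $G$ act by homeomorphisms on a Hausdorff space $M$. For any finite subset $F\subset G$ and any finitary point coders $\mathcal{Q},\mathcal{Q}'$ for this action, there is $N\in\mathbb{N}$ such that the following holds. Let $(g_0,\mathbf c)$ be a generalized $\mathcal{Q}'$-coding of a point $p\in M$ with path sequence $(g_k)_{k\ge0}$ and terminal vertex sequence $(z_k)_{k\ge1}$, and let $(h_0,\mathbf d)$ be a generalized $\mathcal{Q}$-coding of the same point $p$ with path sequence $(h_k)_{k\ge0}$ and terminal vertex sequence $(y_k)_{k\ge1}$. Then for all $m,n\in\mathbb{N}$ with $g_n^{-1}h_m\in F$, \[g_{n+N}\,\overline{W(z_{n+N})}\subset h_mW(y_m).\]
   Context: A finitary point coder $\mathcal{Q}$ for an action of a group $G$ by homeomorphisms on a Hausdorff space $M$ consists of a finite collection of open subsets of $M$, a finite subset $F(\mathcal{Q})\subset G$, and a finite directed graph whose vertices $v$ are labeled by open sets $W(v)$ from that collection and whose edges $e$ are labeled by elements $\mathrm{Lab}(e)\in F(\mathcal{Q})$, such that: (a) whenever there is an edge from $z_1$ to $z_2$ labeled $\alpha$, $\alpha\overline{W(z_2)}\subset W(z_1)$; (b) for every infinite edge path $\mathbf e=(e_k)_{k\ge1}$ with $z_k=\tau(e_k)$ (terminal vertex of $e_k$) and $\alpha_k=\mathrm{Lab}(e_k)$, the sets $\alpha_1\cdots\alpha_nW(z_n)$, $n\in\mathbb{N}$, form a neighborhood basis of some point $p\in M$; such a path is called a strict $\mathcal{Q}$-coding of $p$. A generalized $\mathcal{Q}$-coding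 is a pair $(g_0,\mathbf e)$ with $g_0\in G$ and $\mathbf e$ a strict $\mathcal{Q}$-coding; if $\mathbf e$ codes $p$, then $(g_0,\mathbf e)$ codes $g_0p$. Its terminal vertex sequence is that of $\mathbf e$, and its path sequence is $g_k:=g_0\alpha_1\cdots\alpha_k$, $k\ge0$. *)

theory Defs
  imports "HOL-Analysis.Analysis" "HOL-Algebra.Group"
begin

definition homeo_action :: "('g, 'b) monoid_scheme \<Rightarrow> ('g \<Rightarrow> 'm::t2_space \<Rightarrow> 'm) \<Rightarrow> bool" where
  "homeo_action G act \<longleftrightarrow>
     group G \<and>
     act \<one>\<^bsub>G\<^esub> = id \<and>
     (\<forall>g\<in>carrier G. \<forall>h\<in>carrier G. act (g \<otimes>\<^bsub>G\<^esub> h) = act g \<circ> act h) \<and>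
     (\<forall>g\<in>carrier G. homeomorphism UNIV UNIV (act g) (act (inv\<^bsub>G\<^esub> g)))"

definition esrc :: "'v \<times> 'g \<times> 'v \<Rightarrow> 'v" where "esrc e = fst e"
definition elab :: "'v \<times> 'g \<times> 'v \<Rightarrow> 'g" where "elab e = fst (snd e)"
definition etgt :: "'v \<times> 'g \<times> 'v \<Rightarrow> 'v" where "etgt e = snd (snd e)"

text \<open>Infinite edge path: e k is the edge e_(k+1) of the paper.\<close>
definition edge_path :: "('v \<times> 'g \<times> 'v) set \<Rightarrow> (nat \<Rightarrow> 'v \<times> 'g \<times> 'v) \<Rightarrow> bool" where
  "edge_path E e \<longleftrightarrow> (\<forall>k. e k \<in> E) \<and> (\<forall>k. etgt (e k) = esrc (e (Suc k)))"

fun labprod :: "('g, 'b) monoid_scheme \<Rightarrow> (nat \<Rightarrow> 'v \<times> 'g \<times> 'v) \<Rightarrow> nat \<Rightarrow> 'g" where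
  "labprod G e 0 = \<one>\<^bsub>G\<^esub>"
| "labprod G e (Suc n) = labprod G e n \<otimes>\<^bsub>G\<^esub> elab (e n)"

text \<open>Terminal vertex z_n = terminal vertex of e_n (meaningful for n >= 1).\<close>
definition tvert :: "(nat \<Rightarrow> 'v \<times> 'g \<times> 'v) \<Rightarrow> nat \<Rightarrow> 'v" where
  "tvert e n = etgt (e (n - 1))"

definition pathseq :: "('g, 'b) monoid_scheme \<Rightarrow> 'g \<Rightarrow> (nat \<Rightarrow> 'v \<times> 'g \<times> 'v) \<Rightarrow> nat \<Rightarrow> 'g" where
  "pathseq G g0 e k = g0 \<otimes>\<^bsub>G\<^esub> labprod G e k"

definition nbhd_basis :: "'m::topological_space \<Rightarrow> (nat \<Rightarrow> 'm set) \<Rightarrow> bool" where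
  "nbhd_basis p B \<longleftrightarrow>
     (\<forall>n\<ge>1. p \<in> interior (B n)) \<and>
     (\<forall>U. open U \<and> p \<in> U \<longrightarrow> (\<exists>n\<ge>1. B n \<subseteq> U))"

definition point_coder ::
  "('g, 'b) monoid_scheme \<Rightarrow> ('g \<Rightarrow> 'm::t2_space \<Rightarrow> 'm) \<Rightarrow> 'v set \<Rightarrow> ('v \<times> 'g \<times> 'v) set \<Rightarrow> ('v \<Rightarrow> 'm set) \<Rightarrow> bool" where
  "point_coder G act V E W \<longleftrightarrow>
     finite V \<and> finite E \<and> E \<subseteq> V \<times> carrier G \<times> V \<and>
     (\<forall>v\<in>V. open (W v)) \<and>
     (\<forall>e\<in>E. act (elab e) ` closure (W (etgt e)) \<subseteq> W (esrc e)) \<and>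
     (\<forall>e. edge_path E e \<longrightarrow>
        (\<exists>p. nbhd_basis p (\<lambda>n. act (labprod G e n) ` W (tvert e n))))"

definition strict_coding ::
  "('g, 'b) monoid_scheme \<Rightarrow> ('g \<Rightarrow> 'm::t2_space \<Rightarrow> 'm) \<Rightarrow> ('v \<times> 'g \<times> 'v) set \<Rightarrow> ('v \<Rightarrow> 'm set)
   \<Rightarrow> (nat \<Rightarrow> 'v \<times> 'g \<times> 'v) \<Rightarrow> 'm \<Rightarrow> bool" where
  "strict_coding G act E W e p \<longleftrightarrow>
     edge_path E e \<and> nbhd_basis p (\<lambda>n. act (labprod G e n) ` W (tvert e n))"

definition gen_coding ::
  "('g, 'b) monoid_scheme \<Rightarrow> ('g \<Rightarrow> 'm::t2_space \<Rightarrow> 'm) \<Rightarrow> ('v \<times> 'g \<times> 'v) set \<Rightarrow> ('v \<Rightarrow> 'm set)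
   \<Rightarrow> 'g \<Rightarrow> (nat \<Rightarrow> 'v \<times> 'g \<times> 'v) \<Rightarrow> 'm \<Rightarrow> bool" where
  "gen_coding G act E W g0 e q \<longleftrightarrow>
     g0 \<in> carrier G \<and> (\<exists>p. strict_coding G act E W e p \<and> q = act g0 p)"

end

theory Submission
  imports Defs
begin

lemma ha_group: "homeo_action G act \<Longrightarrow> group G"
  by (simp add: homeo_action_def)

lemma ha_mult: "homeo_action G act \<Longrightarrow> a \<in> carrier G \<Longrightarrow> b \<in> carrier G \<Longrightarrow> act (a \<otimes>\<^bsub>G\<^esub> b) x = act a (act b x)"
  by (simp add: homeo_action_def)

lemma ha_mult_img: "homeo_action G act \<Longrightarrow> a \<in> carrier G \<Longrightarrow> b \<in> carrier G \<Longrightarrow> act (a \<otimes>\<^bsub>G\<^esub> b) ` S = act a ` act b ` S"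
  by (simp add: homeo_action_def image_comp)

lemma ha_one: "homeo_action G act \<Longrightarrow> act \<one>\<^bsub>G\<^esub> x = x"
  by (simp add: homeo_action_def)

lemma ha_homeo: "homeo_action G act \<Longrightarrow> a \<in> carrier G \<Longrightarrow> homeomorphism UNIV UNIV (act a) (act (inv\<^bsub>G\<^esub> a))"
  by (simp add: homeo_action_def)

lemma ha_open: assumes "homeo_action G act" "a \<in> carrier G" "open S" shows "open (act a ` S)"
proof -
  have "openin (top_of_set UNIV) (act a ` S)"
    by (rule homeomorphism_imp_open_map[OF ha_homeo[OF assms(1,2)]]) (use assms(3) in simp)
  then show ?thesis by simp
qed

lemma ha_closed: assumes "homeo_action G act" "a \<in> carrier G" "closed S" shows "closed (act a ` S)"
proof -
  have "closedin (top_of_set UNIV) (act a ` S)"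
    by (rule homeomorphism_imp_closed_map[OF ha_homeo[OF assms(1,2)]]) (use assms(3) in simp)
  then show ?thesis by simp
qed

lemma pc_lab: "point_coder G act V E W \<Longrightarrow> edge_path E e \<Longrightarrow> elab (e i) \<in> carrier G"
proof -
  assume a: "point_coder G act V E W" "edge_path E e"
  have "e i \<in> E" using a(2) by (simp add: edge_path_def)
  moreover have "E \<subseteq> V \<times> carrier G \<times> V" using a(1) by (simp add: point_coder_def)
  ultimately show ?thesis unfolding elab_def by auto
qed

lemma lp_carrier: "group G \<Longrightarrow> (\<And>i. elab (e i) \<in> carrier G) \<Longrightarrow> labprod G e k \<in> carrier G"
  by (induction k) (auto intro: group.subgroupE monoid.m_closed group.is_monoid)

lemma lp_prefix: "(\<forall>i<k. e i = e' i) \<Longrightarrow> labprod G e k = labprod G e' k"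
  by (induction k) auto

lemma tvert_prefix: "(\<forall>i<k. e i = e' i) \<Longrightarrow> k \<ge> 1 \<Longrightarrow> tvert e k = tvert e' k"
  by (simp add: tvert_def)

lemma lp_shift:
  assumes "group G" "\<And>i. elab (c i) \<in> carrier G"
  shows "labprod G c (n + k) = labprod G c n \<otimes>\<^bsub>G\<^esub> labprod G (\<lambda>i. c (n + i)) k"
proof (induction k)
  case 0
  then show ?case using lp_carrier[OF assms] by (simp add: group.is_monoid assms(1) monoid.r_one)
next
  case (Suc k)
  have c1: "labprod G c n \<in> carrier G" by (rule lp_carrier[OF assms])
  have c2: "labprod G (\<lambda>i. c (n + i)) k \<in> carrier G" by (rule lp_carrier) (use assms in auto)
  show ?case using Suc c1 c2 assms
    by (simp add: monoid.m_assoc group.is_monoid)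
qed

lemma step_C:
  assumes ha: "homeo_action G act" and pc: "point_coder G act V E W" and ep: "edge_path E e" and k: "k \<ge> 1"
  shows "act (labprod G e (Suc k)) ` closure (W (tvert e (Suc k))) \<subseteq> act (labprod G e k) ` W (tvert e k)"
proof -
  have ek: "e k \<in> E" using ep by (simp add: edge_path_def)
  have a: "act (elab (e k)) ` closure (W (etgt (e k))) \<subseteq> W (esrc (e k))"
    using pc ek by (simp add: point_coder_def)
  have src: "esrc (e k) = tvert e k"
    using ep k unfolding edge_path_def tvert_def by (metis Suc_diff_1 le_numeral_extra(2) less_le_trans zero_less_one not_le)
  have c1: "labprod G e k \<in> carrier G" by (rule lp_carrier[OF ha_group[OF ha]]) (rule pc_lab[OF pc ep])
  have c2: "elab (e k) \<in> carrier G" by (rule pc_lab[OF pc ep])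
  have "act (labprod G e (Suc k)) ` closure (W (tvert e (Suc k))) = act (labprod G e k) ` act (elab (e k)) ` closure (W (etgt (e k)))"
    using ha_mult_img[OF ha c1 c2] by (simp add: tvert_def)
  also have "\<dots> \<subseteq> act (labprod G e k) ` W (tvert e k)" using a src by (simp add: image_mono)
  finally show ?thesis .
qed

lemma mono_C:
  assumes ha: "homeo_action G act" and pc: "point_coder G act V E W" and ep: "edge_path E e"
    and "1 \<le> a" "a \<le> b"
  shows "act (labprod G e b) ` closure (W (tvert e b)) \<subseteq> act (labprod G e a) ` closure (W (tvert e a))"
  using assms(5)
proof (induction b rule: dec_induct)
  case base then show ?case by simp
next
  case (step b)
  have "act (labprod G e (Suc b)) ` closure (W (tvert e (Suc b))) \<subseteq> act (labprod G e b) ` W (tvert e b)"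
    using step_C[OF ha pc ep] step assms(4) by simp
  also have "\<dots> \<subseteq> act (labprod G e b) ` closure (W (tvert e b))" by (intro image_mono closure_subset)
  finally show ?case using step by blast
qed

lemma mono_B:
  assumes ha: "homeo_action G act" and pc: "point_coder G act V E W" and ep: "edge_path E e"
    and "1 \<le> a" "a \<le> b"
  shows "act (labprod G e b) ` W (tvert e b) \<subseteq> act (labprod G e a) ` W (tvert e a)"
proof (cases "a = b")
  case False
  hence ab: "Suc a \<le> b" using assms by simp
  have "act (labprod G e b) ` W (tvert e b) \<subseteq> act (labprod G e b) ` closure (W (tvert e b))"
    by (intro image_mono closure_subset)
  also have "\<dots> \<subseteq> act (labprod G e (Suc a)) ` closure (W (tvert e (Suc a)))"
    using mono_C[OF ha pc ep _ ab] by simp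
  also have "\<dots> \<subseteq> act (labprod G e a) ` W (tvert e a)"
    using step_C[OF ha pc ep] assms by simp
  finally show ?thesis .
qed simp


lemma nb_mem: "nbhd_basis p B \<Longrightarrow> k \<ge> 1 \<Longrightarrow> p \<in> B k"
  unfolding nbhd_basis_def using interior_subset by blast

lemma nb_sub: "nbhd_basis p B \<Longrightarrow> open U \<Longrightarrow> p \<in> U \<Longrightarrow> \<exists>k\<ge>1. B k \<subseteq> U"
  unfolding nbhd_basis_def by blast

definition kpick :: "(nat \<Rightarrow> nat \<Rightarrow> 'e) \<Rightarrow> 'e set \<Rightarrow> nat set \<Rightarrow> nat \<Rightarrow> 'e" where
  "kpick s A S k = (SOME x. x \<in> A \<and> infinite {N\<in>S. s N k = x})"

primrec kst :: "(nat \<Rightarrow> nat \<Rightarrow> 'e) \<Rightarrow> 'e set \<Rightarrow> nat \<Rightarrow> nat set" where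
  "kst s A 0 = UNIV"
| "kst s A (Suc k) = {N \<in> kst s A k. s N k = kpick s A (kst s A k) k}"

lemma kpick_ex:
  fixes s :: "nat \<Rightarrow> nat \<Rightarrow> 'e"
  assumes "finite A" "\<forall>N i. s N i \<in> A" "infinite S"
  shows "kpick s A S k \<in> A \<and> infinite {N\<in>S. s N k = kpick s A S k}"
proof -
  have "(\<lambda>N. s N k) ` S \<subseteq> A" using assms(2) by auto
  hence "finite ((\<lambda>N. s N k) ` S)" using assms(1) finite_subset by blast
  then obtain a0 where "a0 \<in> S" "infinite {a\<in>S. s a k = s a0 k}"
    using pigeonhole_infinite[OF assms(3)] by blast
  hence "\<exists>x. x \<in> A \<and> infinite {N\<in>S. s N k = x}" using assms(2) by blast
  then show ?thesis unfolding kpick_def by (rule someI_ex)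
qed

lemma kst_inf:
  fixes s :: "nat \<Rightarrow> nat \<Rightarrow> 'e"
  assumes "finite A" "\<forall>N i. s N i \<in> A"
  shows "infinite (kst s A k)"
proof (induction k)
  case 0 then show ?case by simp
next
  case (Suc k) then show ?case using kpick_ex[OF assms Suc, where k=k] by simp
qed

lemma kst_sub: fixes s :: "nat \<Rightarrow> nat \<Rightarrow> 'e" shows "N \<in> kst s A k \<Longrightarrow> i < k \<Longrightarrow> s N i = kpick s A (kst s A i) i"
proof (induction k arbitrary: i)
  case 0 then show ?case by simp
next
  case (Suc k) then show ?case by (auto simp: less_Suc_eq)
qed

lemma konig:
  fixes s :: "nat \<Rightarrow> nat \<Rightarrow> 'e"
  assumes "finite A" "\<forall>N i. s N i \<in> A"
  shows "\<exists>e. (\<forall>i. e i \<in> A) \<and> (\<forall>k m. \<exists>N\<ge>m. \<forall>i<k. s N i = e i)"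
proof (intro exI[of _ "\<lambda>i. kpick s A (kst s A i) i"] conjI allI)
  fix i show "kpick s A (kst s A i) i \<in> A" using kpick_ex[OF assms kst_inf[OF assms]] by blast
next
  fix k m
  obtain N where "N \<ge> m" "N \<in> kst s A k"
    using kst_inf[OF assms, of k] infinite_nat_iff_unbounded_le by blast
  then show "\<exists>N\<ge>m. \<forall>i<k. s N i = kpick s A (kst s A i) i" using kst_sub by blast
qed

lemma core:
  assumes ha: "homeo_action G act" and pc: "point_coder G act V E W"
    and cC: "closed C" and oU: "open U" and CU: "C \<subseteq> U"
  shows "\<exists>N\<ge>1. \<forall>e q. edge_path E e \<and> q \<in> C \<and> nbhd_basis q (\<lambda>k. act (labprod G e k) ` W (tvert e k))
           \<longrightarrow> act (labprod G e N) ` closure (W (tvert e N)) \<subseteq> U"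
proof (rule ccontr)
  define B where "B e k = act (labprod G e k) ` W (tvert e k)" for e k
  define Cs where "Cs e k = act (labprod G e k) ` closure (W (tvert e k))" for e k
  define P where "P N e q \<longleftrightarrow> edge_path E e \<and> q \<in> C \<and> nbhd_basis q (B e) \<and> \<not> Cs e (Suc N) \<subseteq> U" for N e q
  assume nt: "\<not> ?thesis"
  have "\<exists>x. P N (fst x) (snd x)" for N
  proof -
    have "1 \<le> Suc N" by simp
    then have "\<not> (\<forall>e q. edge_path E e \<and> q \<in> C \<and> nbhd_basis q (B e) \<longrightarrow> Cs e (Suc N) \<subseteq> U)"
      using nt unfolding B_def Cs_def by blast
    then show ?thesis unfolding P_def by auto
  qed
  then obtain f where f: "\<And>N. P N (fst (f N)) (snd (f N))" by metis
  define s where "s N = fst (f N)" for N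
  define qs where "qs N = snd (f N)" for N
  have H: "edge_path E (s N)" "qs N \<in> C" "nbhd_basis (qs N) (B (s N))" "\<not> Cs (s N) (Suc N) \<subseteq> U" for N
    using f[of N] unfolding P_def s_def qs_def by auto
  have fE: "finite E" using pc by (simp add: point_coder_def)
  have sE: "\<forall>N i. s N i \<in> E" using H(1) by (simp add: edge_path_def)
  obtain e where eEag: "(\<forall>i. e i \<in> E) \<and> (\<forall>k m. \<exists>N\<ge>m. \<forall>i<k. s N i = e i)"
    using konig[OF fE sE] by (elim exE)
  have eE: "\<And>i. e i \<in> E" using eEag by simp
  have ag: "\<And>k m. \<exists>N\<ge>m. \<forall>i<k. s N i = e i" using eEag by simp
  have ep: "edge_path E e"
    unfolding edge_path_def
  proof (intro conjI allI)
    fix i show "e i \<in> E" by (rule eE)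
  next
    fix i
    obtain N where "\<forall>i'<Suc (Suc i). s N i' = e i'" using ag by blast
    then have "s N i = e i" "s N (Suc i) = e (Suc i)" by auto
    then show "etgt (e i) = esrc (e (Suc i))" using H(1)[of N] by (metis edge_path_def)
  qed
  have Beq: "B (s N) k = B e k" "Cs (s N) k = Cs e k" if "\<forall>i<k. s N i = e i" "k \<ge> 1" for N k
    unfolding B_def Cs_def using lp_prefix[OF that(1), of G] tvert_prefix[OF that] by simp_all
  obtain q0 where nb: "nbhd_basis q0 (B e)"
    using pc ep unfolding point_coder_def B_def by blast
  have q0C: "q0 \<in> C"
  proof (rule ccontr)
    assume "q0 \<notin> C"
    then obtain k where k: "k \<ge> 1" "B e k \<subseteq> - C"
      using nb_sub[OF nb, of "- C"] cC \<open>q0 \<notin> C\<close> by auto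
    obtain N where agN: "\<forall>i<k. s N i = e i" using ag by blast
    have "qs N \<in> B (s N) k" using nb_mem[OF H(3)[of N] k(1)] .
    then show False using Beq(1)[OF agN k(1)] k(2) H(2)[of N] by auto
  qed
  then obtain k where k: "k \<ge> 1" "B e k \<subseteq> U"
    using nb_sub[OF nb oU] CU by auto
  obtain N where N: "N \<ge> k" "\<forall>i<Suc k. s N i = e i" using ag by blast
  have "Cs e (Suc k) \<subseteq> B e k" using step_C[OF ha pc ep k(1)] unfolding B_def Cs_def .
  hence "Cs (s N) (Suc k) \<subseteq> U" using Beq(2)[OF N(2)] k(2) by auto
  moreover have "Cs (s N) (Suc N) \<subseteq> Cs (s N) (Suc k)"
    unfolding Cs_def by (rule mono_C[OF ha pc H(1)]) (use N in auto)
  ultimately show False using H(4)[of N] by blast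
qed

lemma tail_point:
  assumes ha: "homeo_action G act" and pc: "point_coder G act V E W" and ep: "edge_path E e"
    and nb0: "nbhd_basis p0 (\<lambda>k. act (labprod G e k) ` W (tvert e k))"
    and nbq: "nbhd_basis q (\<lambda>k. act (labprod G (\<lambda>i. e (n + i)) k) ` W (tvert (\<lambda>i. e (n + i)) k))"
  shows "act (labprod G e n) q = p0"
proof (rule ccontr)
  assume ne: "act (labprod G e n) q \<noteq> p0"
  obtain U where U: "open U" "p0 \<in> U" "act (labprod G e n) q \<notin> U"
    using t1_space[OF ne[symmetric]] by blast
  obtain j where j: "j \<ge> 1" "act (labprod G e j) ` W (tvert e j) \<subseteq> U"
    using nb_sub[OF nb0 U(1,2)] by auto
  have m: "act (labprod G e (n + j)) ` W (tvert e (n + j)) \<subseteq> act (labprod G e j) ` W (tvert e j)"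
    by (rule mono_B[OF ha pc ep]) (use j in auto)
  have grp: "group G" by (rule ha_group[OF ha])
  have lc: "\<And>i. elab (e i) \<in> carrier G" by (rule pc_lab[OF pc ep])
  have c1: "labprod G e n \<in> carrier G" by (rule lp_carrier[OF grp lc])
  have c2: "labprod G (\<lambda>i. e (n + i)) j \<in> carrier G" by (rule lp_carrier[OF grp]) (use lc in auto)
  have tv: "tvert e (n + j) = tvert (\<lambda>i. e (n + i)) j" using j(1) by (simp add: tvert_def)
  have eq: "act (labprod G e (n + j)) ` W (tvert e (n + j)) = act (labprod G e n) ` (act (labprod G (\<lambda>i. e (n + i)) j) ` W (tvert (\<lambda>i. e (n + i)) j))"
    using lp_shift[OF grp lc, where n=n and k=j] ha_mult_img[OF ha c1 c2] tv by simp
  have "q \<in> act (labprod G (\<lambda>i. e (n + i)) j) ` W (tvert (\<lambda>i. e (n + i)) j)"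
    using nb_mem[OF nbq j(1)] by simp
  then have "act (labprod G e n) q \<in> act (labprod G e (n + j)) ` W (tvert e (n + j))" using eq by blast
  then show False using m j(2) U(3) by blast
qed

theorem lemmaA1:
  fixes G :: "('g, 'b) monoid_scheme"
    and act :: "'g \<Rightarrow> 'm::t2_space \<Rightarrow> 'm"
    and F :: "'g set"
    and V :: "'v set" and E :: "('v \<times> 'g \<times> 'v) set" and W :: "'v \<Rightarrow> 'm set"
    and V' :: "'u set" and E' :: "('u \<times> 'g \<times> 'u) set" and W' :: "'u \<Rightarrow> 'm set"
  assumes "homeo_action G act"
    and "finite F" and "F \<subseteq> carrier G"
    and "point_coder G act V E W"
    and "point_coder G act V' E' W'"
  shows "\<exists>N::nat. \<forall>g0 c h0 d p.
           gen_coding G act E' W' g0 c p \<and> gen_coding G act E W h0 d p \<longrightarrow>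
           (\<forall>m n. m \<ge> 1 \<and> n \<ge> 1 \<and>
               inv\<^bsub>G\<^esub> (pathseq G g0 c n) \<otimes>\<^bsub>G\<^esub> pathseq G h0 d m \<in> F \<longrightarrow>
               act (pathseq G g0 c (n + N)) ` closure (W' (tvert c (n + N)))
                 \<subseteq> act (pathseq G h0 d m) ` W (tvert d m))"
proof -
  note ha = assms(1)
  note pc = assms(4)
  note pc' = assms(5)
  have grp: "group G" by (rule ha_group[OF ha])
  define Cset :: "'g \<times> 'v \<times> 'g \<times> 'v \<Rightarrow> 'm set" where "Cset x = act (fst x) ` act (elab (snd x)) ` closure (W (etgt (snd x)))" for x
  define Uset :: "'g \<times> 'v \<times> 'g \<times> 'v \<Rightarrow> 'm set" where "Uset x = act (fst x) ` W (esrc (snd x))" for x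
  have EV: "E \<subseteq> V \<times> carrier G \<times> V" using pc by (simp add: point_coder_def)
  have "\<forall>x\<in>F \<times> E. \<exists>N\<ge>1. \<forall>e q. edge_path E' e \<and> q \<in> Cset x \<and> nbhd_basis q (\<lambda>k. act (labprod G e k) ` W' (tvert e k))
           \<longrightarrow> act (labprod G e N) ` closure (W' (tvert e N)) \<subseteq> Uset x"
  proof
    fix x assume x: "x \<in> F \<times> E"
    then obtain f ed where xf: "x = (f, ed)" "f \<in> F" "ed \<in> E" by blast
    have fc: "f \<in> carrier G" using xf assms(3) by blast
    have edc: "elab ed \<in> carrier G" "esrc ed \<in> V" using xf EV unfolding elab_def esrc_def by auto
    have "Cset x = act (f \<otimes>\<^bsub>G\<^esub> elab ed) ` closure (W (etgt ed))"
      unfolding Cset_def using xf ha_mult_img[OF ha fc edc(1)] by simp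
    moreover have "closed (act (f \<otimes>\<^bsub>G\<^esub> elab ed) ` closure (W (etgt ed)))"
      by (rule ha_closed[OF ha]) (use fc edc grp in \<open>auto intro: group.subgroupE monoid.m_closed group.is_monoid\<close>)
    ultimately have cl: "closed (Cset x)" by simp
    have "open (W (esrc ed))" using pc edc(2) by (simp add: point_coder_def)
    hence op: "open (Uset x)" unfolding Uset_def using xf ha_open[OF ha fc] by simp
    have "act (elab ed) ` closure (W (etgt ed)) \<subseteq> W (esrc ed)" using pc xf(3) by (simp add: point_coder_def)
    hence su: "Cset x \<subseteq> Uset x" unfolding Cset_def Uset_def using xf by (simp add: image_mono)
    show "\<exists>N\<ge>1. \<forall>e q. edge_path E' e \<and> q \<in> Cset x \<and> nbhd_basis q (\<lambda>k. act (labprod G e k) ` W' (tvert e k))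
           \<longrightarrow> act (labprod G e N) ` closure (W' (tvert e N)) \<subseteq> Uset x"
      by (rule core[OF ha pc' cl op su])
  qed
  then have "\<exists>Nf. \<forall>x\<in>F \<times> E. Nf x \<ge> 1 \<and> (\<forall>e q. edge_path E' e \<and> q \<in> Cset x \<and> nbhd_basis q (\<lambda>k. act (labprod G e k) ` W' (tvert e k))
           \<longrightarrow> act (labprod G e (Nf x)) ` closure (W' (tvert e (Nf x))) \<subseteq> Uset x)"
    by (rule bchoice)
  then obtain Nf where Nf: "\<forall>x\<in>F \<times> E. Nf x \<ge> 1 \<and> (\<forall>e q. edge_path E' e \<and> q \<in> Cset x \<and> nbhd_basis q (\<lambda>k. act (labprod G e k) ` W' (tvert e k))
           \<longrightarrow> act (labprod G e (Nf x)) ` closure (W' (tvert e (Nf x))) \<subseteq> Uset x)"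
    by (elim exE)
  have fin: "finite (F \<times> E)" using assms(2) pc by (simp add: point_coder_def)
  define N where "N = sum Nf (F \<times> E) + 1"
  have NfN: "Nf x \<le> N" if "x \<in> F \<times> E" for x
    unfolding N_def using member_le_sum[OF that _ fin, of Nf] by simp
  have N1: "N \<ge> 1" unfolding N_def by simp
  show ?thesis
  proof (rule exI[of _ N], intro allI impI)
    fix g0 c h0 d p m n
    assume gc: "gen_coding G act E' W' g0 c p \<and> gen_coding G act E W h0 d p"
      and mn: "1 \<le> m \<and> 1 \<le> n \<and> inv\<^bsub>G\<^esub> pathseq G g0 c n \<otimes>\<^bsub>G\<^esub> pathseq G h0 d m \<in> F"
    obtain p0 where g0c: "g0 \<in> carrier G" and sc: "strict_coding G act E' W' c p0" and pp0: "p = act g0 p0"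
      using gc unfolding gen_coding_def by blast
    obtain r0 where h0c: "h0 \<in> carrier G" and sd: "strict_coding G act E W d r0" and pr0: "p = act h0 r0"
      using gc unfolding gen_coding_def by blast
    have epc: "edge_path E' c" and nbc: "nbhd_basis p0 (\<lambda>k. act (labprod G c k) ` W' (tvert c k))"
      using sc by (auto simp: strict_coding_def)
    have epd: "edge_path E d" and nbd: "nbhd_basis r0 (\<lambda>k. act (labprod G d k) ` W (tvert d k))"
      using sd by (auto simp: strict_coding_def)
    define c' where "c' = (\<lambda>i. c (n + i))"
    define d' where "d' = (\<lambda>i. d (m + i))"
    have epc': "edge_path E' c'" using epc unfolding c'_def edge_path_def by simp
    have epd': "edge_path E d'" using epd unfolding d'_def edge_path_def by simp
    obtain q where nbq: "nbhd_basis q (\<lambda>k. act (labprod G c' k) ` W' (tvert c' k))"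
      using pc' epc' unfolding point_coder_def by blast
    obtain r where nbr: "nbhd_basis r (\<lambda>k. act (labprod G d' k) ` W (tvert d' k))"
      using pc epd' unfolding point_coder_def by blast
    have q0: "act (labprod G c n) q = p0" using tail_point[OF ha pc' epc nbc nbq[unfolded c'_def]] .
    have r0: "act (labprod G d m) r = r0" using tail_point[OF ha pc epd nbd nbr[unfolded d'_def]] .
    have lcc: "\<And>i. elab (c i) \<in> carrier G" by (rule pc_lab[OF pc' epc])
    have lcd: "\<And>i. elab (d i) \<in> carrier G" by (rule pc_lab[OF pc epd])
    have lpc: "labprod G c n \<in> carrier G" by (rule lp_carrier[OF grp lcc])
    have lpd: "labprod G d m \<in> carrier G" by (rule lp_carrier[OF grp lcd])
    have lpc': "labprod G c' N \<in> carrier G" by (rule lp_carrier[OF grp]) (use lcc in \<open>auto simp: c'_def\<close>)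
    define gn where "gn = pathseq G g0 c n"
    define hm where "hm = pathseq G h0 d m"
    have gnc: "gn \<in> carrier G" unfolding gn_def pathseq_def using g0c lpc grp by (simp add: group.is_monoid monoid.m_closed)
    have hmc: "hm \<in> carrier G" unfolding hm_def pathseq_def using h0c lpd grp by (simp add: group.is_monoid monoid.m_closed)
    have pq: "p = act gn q" unfolding gn_def pathseq_def using pp0 q0 ha_mult[OF ha g0c lpc] by simp
    have pr: "p = act hm r" unfolding hm_def pathseq_def using pr0 r0 ha_mult[OF ha h0c lpd] by simp
    define f where "f = inv\<^bsub>G\<^esub> gn \<otimes>\<^bsub>G\<^esub> hm"
    have fF: "f \<in> F" using mn unfolding f_def gn_def hm_def by simp
    have igc: "inv\<^bsub>G\<^esub> gn \<in> carrier G" using grp gnc by (simp add: group.inv_closed)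
    have qf: "q = act f r"
    proof -
      have "act f r = act (inv\<^bsub>G\<^esub> gn) (act gn q)" unfolding f_def using ha_mult[OF ha igc hmc] pr pq by simp
      also have "\<dots> = act (inv\<^bsub>G\<^esub> gn \<otimes>\<^bsub>G\<^esub> gn) q" using ha_mult[OF ha igc gnc] by simp
      also have "\<dots> = q" using grp gnc ha_one[OF ha] by (simp add: group.l_inv)
      finally show ?thesis by simp
    qed
    define x where "x = (f, d m)"
    have dmE: "d m \<in> E" using epd by (simp add: edge_path_def)
    have xFE: "x \<in> F \<times> E" unfolding x_def using fF dmE by simp
    have "r \<in> act (labprod G d' 1) ` W (tvert d' 1)" using nb_mem[OF nbr, of 1] by simp
    moreover have "labprod G d' 1 = elab (d m)" using grp lcd by (simp add: d'_def group.is_monoid monoid.l_one)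
    moreover have "tvert d' 1 = etgt (d m)" by (simp add: d'_def tvert_def)
    ultimately have "r \<in> act (elab (d m)) ` closure (W (etgt (d m)))" using closure_subset by auto
    hence qC: "q \<in> Cset x" unfolding Cset_def x_def qf by simp
    have "act (labprod G c' (Nf x)) ` closure (W' (tvert c' (Nf x))) \<subseteq> Uset x"
      using Nf xFE epc' qC nbq by blast
    moreover have "act (labprod G c' N) ` closure (W' (tvert c' N)) \<subseteq> act (labprod G c' (Nf x)) ` closure (W' (tvert c' (Nf x)))"
      by (rule mono_C[OF ha pc' epc']) (use Nf xFE NfN in auto)
    ultimately have sub: "act (labprod G c' N) ` closure (W' (tvert c' N)) \<subseteq> act f ` W (esrc (d m))"
      unfolding Uset_def x_def by auto
    have src: "esrc (d m) = tvert d m"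
    proof -
      have "m = Suc (m - 1)" using mn by simp
      then show ?thesis using epd unfolding tvert_def edge_path_def by metis
    qed
    have ps: "pathseq G g0 c (n + N) = gn \<otimes>\<^bsub>G\<^esub> labprod G c' N"
      unfolding gn_def pathseq_def c'_def using lp_shift[OF grp lcc, where n=n and k=N] grp g0c lpc lpc'[unfolded c'_def]
      by (simp add: group.is_monoid monoid.m_assoc)
    have tv: "tvert c (n + N) = tvert c' N" using N1 by (simp add: c'_def tvert_def)
    have fc: "f \<in> carrier G" using fF assms(3) by blast
    have gf: "gn \<otimes>\<^bsub>G\<^esub> f = hm" unfolding f_def using grp gnc hmc igc
      by (simp add: group.is_monoid monoid.m_assoc[symmetric] group.r_inv monoid.l_one)
    have "act (pathseq G g0 c (n + N)) ` closure (W' (tvert c (n + N))) = act gn ` act (labprod G c' N) ` closure (W' (tvert c' N))"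
      using ps tv ha_mult_img[OF ha gnc lpc'] by simp
    also have "\<dots> \<subseteq> act gn ` act f ` W (esrc (d m))" using sub by (rule image_mono)
    also have "\<dots> = act hm ` W (tvert d m)" using ha_mult_img[OF ha gnc fc] gf src by simp
    finally show "act (pathseq G g0 c (n + N)) ` closure (W' (tvert c (n + N))) \<subseteq> act (pathseq G h0 d m) ` W (tvert d m)"
      unfolding hm_def .
  qed
qed

end
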